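(* Let $\kappa$ be a regular uncountable cardinal and $I$ an ideal on $\kappa$. If $I\restriction A$ is pleasant for every $A\in I^+$, then $I$ is normal.
   Context: An ideal on $\kappa$ is a family of subsets of $\kappa$ closed under subsets and finite unions, which is $<\kappa$-complete and contains all singletons. $I^+=\{X\subseteq\kappa: X\notin I\}$. For $A\in I^+$, $I\restriction A=\{X\subseteq\kappa: X\cap A\in I\}$. For $A\subseteq\kappa$ and $X_\alpha\subseteq\kappa$, $\bigtriangledown_{\alpha\in A}X_\alpha=\{\xi<\kappa:\exists\alpha<\xi\,(\alpha\in A\wedge \xi\in X_\alpha)\}$. $I$ is normal if $X_\alpha\in I$ for all $\alpha<\kappa$ implies $\bigtriangledown_{\alpha<\kappa}X_\alpha\in I$. $I$ is pleasant if whenever $A\in I$ and $X_\alpha\in I$ for all $\alpha$, then $\bigtriangledown_{\alpha\in A}X_\alpha\in I$. *)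

theory Defs
  imports Main
begin

unbundle cardinal_syntax

text \<open>A cardinal kappa is represented by a cardinal well-order r (Card_order r);
  the ordinals below kappa are the elements of Field r, and alpha < xi means
  (alpha, xi) in r with alpha distinct from xi.  Subsets of kappa are subsets of Field r.\<close>

definition is_ideal :: "'a rel \<Rightarrow> 'a set set \<Rightarrow> bool" where
  "is_ideal r I \<longleftrightarrow>
     I \<subseteq> Pow (Field r) \<and>
     (\<forall>X Y. X \<in> I \<and> Y \<subseteq> X \<longrightarrow> Y \<in> I) \<and>
     (\<forall>X Y. X \<in> I \<and> Y \<in> I \<longrightarrow> X \<union> Y \<in> I) \<and>
     (\<forall>F. F \<subseteq> I \<and> |F| <o r \<longrightarrow> \<Union>F \<in> I) \<and>
     (\<forall>\<xi>\<in>Field r. {\<xi>} \<in> I)"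

definition ideal_pos :: "'a rel \<Rightarrow> 'a set set \<Rightarrow> 'a set set" where
  "ideal_pos r I = {X. X \<subseteq> Field r \<and> X \<notin> I}"

definition ideal_restr :: "'a rel \<Rightarrow> 'a set set \<Rightarrow> 'a set \<Rightarrow> 'a set set" where
  "ideal_restr r I A = {X. X \<subseteq> Field r \<and> X \<inter> A \<in> I}"

definition diag_union :: "'a rel \<Rightarrow> 'a set \<Rightarrow> ('a \<Rightarrow> 'a set) \<Rightarrow> 'a set" where
  "diag_union r A X = {\<xi> \<in> Field r. \<exists>\<alpha>. (\<alpha>, \<xi>) \<in> r \<and> \<alpha> \<noteq> \<xi> \<and> \<alpha> \<in> A \<and> \<xi> \<in> X \<alpha>}"

definition normal_ideal :: "'a rel \<Rightarrow> 'a set set \<Rightarrow> bool" where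
  "normal_ideal r I \<longleftrightarrow>
     (\<forall>X. (\<forall>\<alpha>\<in>Field r. X \<alpha> \<in> I) \<longrightarrow> diag_union r (Field r) X \<in> I)"

definition pleasant_ideal :: "'a rel \<Rightarrow> 'a set set \<Rightarrow> bool" where
  "pleasant_ideal r I \<longleftrightarrow>
     (\<forall>A X. A \<in> I \<and> (\<forall>\<alpha>\<in>Field r. X \<alpha> \<in> I) \<longrightarrow> diag_union r A X \<in> I)"

end

theory Submission
  imports Defs
begin

theorem theorem2p4:
  fixes r :: "'a rel" and I :: "'a set set"
  assumes "Card_order r" and "regularCard r" and "(natLeq, r) \<in> ordLess"
    and "is_ideal r I"
    and "\<forall>A \<in> ideal_pos r I. pleasant_ideal r (ideal_restr r I A)"
  shows "normal_ideal r I"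
  unfolding normal_ideal_def
proof (intro allI impI, rule ccontr)
  fix X assume XI: "\<forall>\<alpha>\<in>Field r. X \<alpha> \<in> I"
  define D where "D = diag_union r (Field r) X"
  assume DI: "D \<notin> I"
  have wf: "wf (r - Id)" using assms(1) unfolding card_order_on_def well_order_on_def by blast
  have FN: "Field r \<noteq> {}"
  proof -
    obtain g where g: "embedS natLeq r g" using assms(3) unfolding ordLess_def by blast
    then have "embed natLeq r g" unfolding embedS_def by blast
    then have "g 0 \<in> Field r" by (rule embed_in_Field) (simp add: Field_natLeq)
    then show ?thesis by blast
  qed
  have sub0: "\<forall>X Y. X \<in> I \<and> Y \<subseteq> X \<longrightarrow> Y \<in> I"
    using assms(4) unfolding is_ideal_def by (elim conjE) assumption
  have un0: "\<forall>X Y. X \<in> I \<and> Y \<in> I \<longrightarrow> X \<union> Y \<in> I"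
    using assms(4) unfolding is_ideal_def by (elim conjE) assumption
  have IP: "I \<subseteq> Pow (Field r)"
    using assms(4) unfolding is_ideal_def by (elim conjE) assumption
  have sing: "\<forall>\<xi>\<in>Field r. {\<xi>} \<in> I"
    using assms(4) unfolding is_ideal_def by (elim conjE) assumption
  have sub: "\<And>Y Z. Y \<in> I \<Longrightarrow> Z \<subseteq> Y \<Longrightarrow> Z \<in> I" using sub0 by blast
  have un: "\<And>Y Z. Y \<in> I \<Longrightarrow> Z \<in> I \<Longrightarrow> Y \<union> Z \<in> I" using un0 by blast
  have emp: "{} \<in> I"
  proof -
    obtain x where "x \<in> Field r" using FN by blast
    then have "{x} \<in> I" using sing by blast
    then show ?thesis using sub by blast
  qed
  define f where "f \<xi> = (SOME \<alpha>. (\<alpha>, \<xi>) \<in> r \<and> \<alpha> \<noteq> \<xi> \<and> \<xi> \<in> X \<alpha>)" for \<xi>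
  have fD: "(f \<xi>, \<xi>) \<in> r \<and> f \<xi> \<noteq> \<xi> \<and> \<xi> \<in> X (f \<xi>)" if "\<xi> \<in> D" for \<xi>
  proof -
    from that obtain \<alpha> where "(\<alpha>, \<xi>) \<in> r \<and> \<alpha> \<noteq> \<xi> \<and> \<xi> \<in> X \<alpha>"
      unfolding D_def diag_union_def by blast
    then show ?thesis unfolding f_def by (rule someI)
  qed
  have fin: "\<exists>k. (f ^^ k) \<xi> \<notin> D" for \<xi>
  proof (rule ccontr)
    assume "\<not> ?thesis"
    then have "\<forall>i. ((f ^^ Suc i) \<xi>, (f ^^ i) \<xi>) \<in> r - Id" using fD by auto
    then have "\<exists>g. \<forall>i. (g (Suc i), g i) \<in> r - Id" by (rule exI[of _ "\<lambda>i. (f ^^ i) \<xi>"])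
    then show False using wf unfolding wf_iff_no_infinite_down_chain by blast
  qed
  define n where "n \<xi> = (LEAST k. (f ^^ k) \<xi> \<notin> D)" for \<xi>
  have nstep: "n \<xi> = Suc (n (f \<xi>))" if "\<xi> \<in> D" for \<xi>
  proof -
    obtain k where k: "(f ^^ k) \<xi> \<notin> D" using fin by blast
    have "n \<xi> = Suc (LEAST m. (f ^^ Suc m) \<xi> \<notin> D)"
      unfolding n_def by (rule Least_Suc[where P="\<lambda>k. (f ^^ k) \<xi> \<notin> D", OF k]) (use that in simp)
    also have "(\<lambda>m. (f ^^ Suc m) \<xi> \<notin> D) = (\<lambda>m. (f ^^ m) (f \<xi>) \<notin> D)"
      by (simp add: funpow_Suc_right del: funpow.simps)
    finally show ?thesis unfolding n_def by simp
  qed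
  have key: "B \<in> I" if BD: "B \<subseteq> D" and Bp: "\<And>\<xi>. \<xi> \<in> B \<Longrightarrow> f \<xi> \<notin> B" for B
  proof (rule ccontr)
    assume BI: "B \<notin> I"
    have DF: "D \<subseteq> Field r" unfolding D_def diag_union_def by blast
    have Bpos: "B \<in> ideal_pos r I" using BI BD DF unfolding ideal_pos_def by blast
    then have pl: "pleasant_ideal r (ideal_restr r I B)" using assms(5) by blast
    define A where "A = f ` B"
    have AF: "A \<subseteq> Field r" unfolding A_def using fD BD by (auto intro: FieldI1)
    have "A \<inter> B = {}" unfolding A_def using Bp by blast
    then have Ar: "A \<in> ideal_restr r I B" using AF emp unfolding ideal_restr_def by auto
    have Xr: "\<forall>\<alpha>\<in>Field r. X \<alpha> \<in> ideal_restr r I B"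
    proof
      fix \<alpha> assume "\<alpha> \<in> Field r"
      then have "X \<alpha> \<in> I" using XI by blast
      then have "X \<alpha> \<subseteq> Field r" "X \<alpha> \<inter> B \<in> I" using IP sub[of "X \<alpha>" "X \<alpha> \<inter> B"] by auto
      then show "X \<alpha> \<in> ideal_restr r I B" unfolding ideal_restr_def by blast
    qed
    have "diag_union r A X \<in> ideal_restr r I B" using pl Ar Xr unfolding pleasant_ideal_def by blast
    then have "diag_union r A X \<inter> B \<in> I" unfolding ideal_restr_def by blast
    moreover have "B \<subseteq> diag_union r A X"
    proof
      fix \<xi> assume "\<xi> \<in> B"
      then show "\<xi> \<in> diag_union r A X" using fD[of \<xi>] BD DF unfolding diag_union_def A_def by blast
    qed
    ultimately have "B \<in> I" by (simp add: Int_absorb1)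
    then show False using BI by blast
  qed
  have "{\<xi>\<in>D. even (n \<xi>)} \<in> I"
  proof (rule key)
    fix \<xi> assume "\<xi> \<in> {\<xi>\<in>D. even (n \<xi>)}"
    then show "f \<xi> \<notin> {\<xi>\<in>D. even (n \<xi>)}" using nstep[of \<xi>] by simp
  qed blast
  moreover have "{\<xi>\<in>D. odd (n \<xi>)} \<in> I"
  proof (rule key)
    fix \<xi> assume "\<xi> \<in> {\<xi>\<in>D. odd (n \<xi>)}"
    then show "f \<xi> \<notin> {\<xi>\<in>D. odd (n \<xi>)}" using nstep[of \<xi>] by simp
  qed blast
  ultimately have "{\<xi>\<in>D. even (n \<xi>)} \<union> {\<xi>\<in>D. odd (n \<xi>)} \<in> I" by (rule un)
  moreover have "{\<xi>\<in>D. even (n \<xi>)} \<union> {\<xi>\<in>D. odd (n \<xi>)} = D" by auto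
  ultimately show False using DI by simp
qed

end
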